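(* Assume $l>-\infty$, $r=\infty$, (A2) ($\inf\operatorname{supp}\mu>-\infty$ and there is $y_0\in I$ with $\int_{\mathbb R_+}q(y_0,y_0+ax)\mu(dx)<\infty$ for all $a>0$), and $$\limsup_{x\searrow l}\frac{|\eta(x)|}{x-l}<\infty,\qquad \limsup_{x\nearrow\infty}\frac{|\eta(x)|}{x}<\infty.$$ Then $\liminf_{y\to\infty}G_y(\bar a(y))>0$ and $\liminf_{y\searrow l}G_y(\bar a(y))>0$.
   Context: Let $I=(l,r)$, $\eta\colon\mathbb R\to\mathbb R$ Borel with $\eta\ne0$ on $I$, $1/\eta^2\in L^1_{\mathrm{loc}}(I)$, $\eta=0$ off $I$. $q(y,x)=\int_y^x\int_y^u\frac{2}{\eta^2(z)}dz\,du\in[0,\infty]$ for $y\in I,x\in\mathbb R$. $\mu\ne\delta_0$ is a centered probability measure with finite first moment, $G_y(a)=\int q(y,y+ax)\mu(dx)$, and $\bar a(y)=\frac{l-y}{\inf\operatorname{supp}\mu}$ for $y\in I$. *)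

theory Defs
  imports "HOL-Probability.Probability"
begin

text \<open>The density 2/eta^2 as an extended nonnegative real; it is +infinity where eta = 0
  (i.e. off the interval I).\<close>
definition two_over_eta_sq :: "(real \<Rightarrow> real) \<Rightarrow> real \<Rightarrow> ennreal" where
  "two_over_eta_sq \<eta> z = (if \<eta> z = 0 then \<infinity> else ennreal (2 / (\<eta> z)^2))"

text \<open>q(y,x) = int_y^x int_y^u 2/eta^2(z) dz du, with oriented integrals (both signs flip
  when x < y, so the value is the nonnegative double integral over u between x and y).\<close>
definition qfun :: "(real \<Rightarrow> real) \<Rightarrow> real \<Rightarrow> real \<Rightarrow> ennreal" where
  "qfun \<eta> y x =
     (if y \<le> x then (\<integral>\<^sup>+ u\<in>{y..x}. (\<integral>\<^sup>+ z\<in>{y..u}. two_over_eta_sq \<eta> z \<partial>lborel) \<partial>lborel)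
      else (\<integral>\<^sup>+ u\<in>{x..y}. (\<integral>\<^sup>+ z\<in>{u..y}. two_over_eta_sq \<eta> z \<partial>lborel) \<partial>lborel))"

definition Gfun :: "(real \<Rightarrow> real) \<Rightarrow> real measure \<Rightarrow> real \<Rightarrow> real \<Rightarrow> ennreal" where
  "Gfun \<eta> \<mu> y a = (\<integral>\<^sup>+ x. qfun \<eta> y (y + a * x) \<partial>\<mu>)"

definition msupp :: "real measure \<Rightarrow> real set" where
  "msupp \<mu> = {x. \<forall>e>0. emeasure \<mu> {x - e<..<x + e} > 0}"

definition abar :: "real \<Rightarrow> real measure \<Rightarrow> real \<Rightarrow> real" where
  "abar l \<mu> y = (l - y) / Inf (msupp \<mu>)"

end

theory Submission
  imports Defs
begin

lemma f_lower:
  assumes "\<bar>\<eta> z\<bar> \<le> K" "K > 0"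
  shows "ennreal (2/K^2) \<le> two_over_eta_sq \<eta> z"
proof (cases "\<eta> z = 0")
  case True thus ?thesis by (simp add: two_over_eta_sq_def)
next
  case False
  have "(\<eta> z)^2 \<le> K^2"
    using assms by (metis abs_ge_zero power2_abs power_mono)
  moreover have "(\<eta> z)^2 > 0" using False by simp
  ultimately have "2/K^2 \<le> 2/(\<eta> z)^2"
    using assms(2) by (intro divide_left_mono) auto
  thus ?thesis using False by (simp add: two_over_eta_sq_def ennreal_leI)
qed

lemma inner_lower:
  assumes "\<And>z. z \<in> {u..y} \<Longrightarrow> ennreal c \<le> f z" "u \<le> y" "c \<ge> 0"
  shows "ennreal (c*(y-u)) \<le> (\<integral>\<^sup>+ z\<in>{u..y}. f z \<partial>lborel)"
proof -
  have "(\<integral>\<^sup>+ z. ennreal c * indicator {u..y} z \<partial>lborel) \<le> (\<integral>\<^sup>+ z\<in>{u..y}. f z \<partial>lborel)"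
    by (intro nn_integral_mono) (auto simp: indicator_def assms(1))
  moreover have "(\<integral>\<^sup>+ z. ennreal c * indicator {u..y} z \<partial>lborel) = ennreal (c*(y-u))"
    using assms by (simp add: nn_integral_cmult_indicator ennreal_mult)
  ultimately show ?thesis by simp
qed

lemma Q_lower:
  assumes "l < y" "K > 0" "\<And>z. z \<in> {(y+l)/2..y} \<Longrightarrow> \<bar>\<eta> z\<bar> \<le> K"
  shows "ennreal (2/K^2 * (y-l)^2/16) \<le>
    (\<integral>\<^sup>+ u\<in>{(y+l)/2..y}. (\<integral>\<^sup>+ z\<in>{u..y}. two_over_eta_sq \<eta> z \<partial>lborel) \<partial>lborel)"
proof -
  define a where "a = (y+l)/2"
  define m where "m = (a+y)/2"
  define c where "c = 2/K^2"
  have c0: "c \<ge> 0" unfolding c_def by simp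
  have inn: "ennreal (c*(y-a)/2) \<le> (\<integral>\<^sup>+ z\<in>{u..y}. two_over_eta_sq \<eta> z \<partial>lborel)"
    if "u \<in> {a..m}" for u
  proof -
    have "ennreal (c*(y-a)/2) \<le> ennreal (c*(y-u))"
    proof (intro ennreal_leI)
      have "(y-a)/2 \<le> y-u" using that unfolding m_def by auto
      hence "c*((y-a)/2) \<le> c*(y-u)" using c0 by (rule mult_left_mono)
      thus "c*(y-a)/2 \<le> c*(y-u)" by simp
    qed
    also have "\<dots> \<le> (\<integral>\<^sup>+ z\<in>{u..y}. two_over_eta_sq \<eta> z \<partial>lborel)"
    proof (unfold c_def, intro inner_lower f_lower)
      show "u \<le> y" using that assms(1) unfolding a_def m_def by (auto simp: field_simps)
      fix z assume "z \<in> {u..y}"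
      thus "\<bar>\<eta> z\<bar> \<le> K" using that assms unfolding a_def m_def by auto
    qed (use assms in \<open>auto simp: c_def\<close>)
    finally show ?thesis .
  qed
  have "(\<integral>\<^sup>+ u. ennreal (c*(y-a)/2) * indicator {a..m} u \<partial>lborel) \<le>
    (\<integral>\<^sup>+ u\<in>{a..y}. (\<integral>\<^sup>+ z\<in>{u..y}. two_over_eta_sq \<eta> z \<partial>lborel) \<partial>lborel)"
    using inn by (intro nn_integral_mono) (auto simp: indicator_def m_def)
  moreover have "(\<integral>\<^sup>+ u. ennreal (c*(y-a)/2) * indicator {a..m} u \<partial>lborel) = ennreal (c*(y-a)/2) * ennreal (m-a)"
    using assms c0 unfolding a_def m_def by (simp add: nn_integral_cmult_indicator)
  moreover have "ennreal (c*(y-a)/2) * ennreal (m-a) = ennreal (c*(y-a)/2 * (m-a))"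
    using assms c0 unfolding a_def m_def by (intro ennreal_mult[symmetric]) auto
  moreover have "c*(y-a)/2 * (m-a) = 2/K^2 * (y-l)^2/16"
    using assms(2) unfolding c_def m_def a_def by (simp add: field_simps power2_eq_square)
  ultimately show ?thesis unfolding a_def by simp
qed

lemma Bconst: "(d::real) \<noteq> 0 \<Longrightarrow> C \<noteq> 0 \<Longrightarrow> 1/(8*C^2) = 2/(C*d)^2*d^2/16"
  by (simp add: field_simps power2_eq_square)

lemma q_ge_Q:
  assumes "w \<le> (y+l)/2" "l < y"
  shows "(\<integral>\<^sup>+ u\<in>{(y+l)/2..y}. (\<integral>\<^sup>+ z\<in>{u..y}. two_over_eta_sq \<eta> z \<partial>lborel) \<partial>lborel) \<le> qfun \<eta> y w"
proof -
  have "w < y" using assms by simp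
  hence "qfun \<eta> y w = (\<integral>\<^sup>+ u\<in>{w..y}. (\<integral>\<^sup>+ z\<in>{u..y}. two_over_eta_sq \<eta> z \<partial>lborel) \<partial>lborel)"
    by (simp add: qfun_def)
  moreover have "(\<integral>\<^sup>+ u\<in>{(y+l)/2..y}. (\<integral>\<^sup>+ z\<in>{u..y}. two_over_eta_sq \<eta> z \<partial>lborel) \<partial>lborel)
     \<le> (\<integral>\<^sup>+ u\<in>{w..y}. (\<integral>\<^sup>+ z\<in>{u..y}. two_over_eta_sq \<eta> z \<partial>lborel) \<partial>lborel)"
    using assms by (intro nn_integral_mono) (auto simp: indicator_def)
  ultimately show ?thesis by simp
qed

lemma supp_exists:
  assumes sets_mu: "sets \<mu> = sets borel" and pos: "emeasure \<mu> {x. x < c} > 0"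
  shows "\<exists>s\<in>msupp \<mu>. s < c"
proof (rule ccontr)
  assume "\<not> ?thesis"
  hence ns: "\<And>x. x < c \<Longrightarrow> \<exists>e>0. emeasure \<mu> {x - e<..<x + e} = 0"
    unfolding msupp_def by (force simp: not_less)
  define I where "I = {pq::real\<times>real. fst pq \<in> \<rat> \<and> snd pq \<in> \<rat> \<and> emeasure \<mu> {fst pq<..<snd pq} = 0}"
  have "I \<subseteq> \<rat> \<times> \<rat>" unfolding I_def by auto
  hence cI: "countable I" by (meson countable_SIGMA countable_rat countable_subset)
  have null: "(\<Union>pq\<in>I. {fst pq<..<snd pq}) \<in> null_sets \<mu>"
    by (rule null_sets_UN'[OF cI]) (auto simp: I_def sets_mu null_sets_def)
  have sub: "{x. x < c} \<subseteq> (\<Union>pq\<in>I. {fst pq<..<snd pq})"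
  proof
    fix x assume "x \<in> {x. x < c}"
    then obtain e where e: "e > 0" "emeasure \<mu> {x - e<..<x + e} = 0" using ns by auto
    obtain p where p: "p \<in> \<rat>" "x - e < p" "p < x" using Rats_dense_in_real[of "x-e" x] e by auto
    obtain q where q: "q \<in> \<rat>" "x < q" "q < x + e" using Rats_dense_in_real[of x "x+e"] e by auto
    have "emeasure \<mu> {p<..<q} \<le> emeasure \<mu> {x - e<..<x + e}"
      using p q by (intro emeasure_mono) (auto simp: sets_mu)
    hence "(p,q) \<in> I" using p q e unfolding I_def by auto
    thus "x \<in> (\<Union>pq\<in>I. {fst pq<..<snd pq})" using p q by force
  qed
  have "{x. x < c} \<in> null_sets \<mu>"
    by (rule null_sets_subset[OF null _ sub]) (simp add: sets_mu)
  thus False using pos by (auto dest: null_setsD1)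
qed


lemma G_lower:
  assumes sets_mu: "sets \<mu> = sets borel" and m0: "m < 0" and ly: "l < y"
    and B: "ennreal B \<le> (\<integral>\<^sup>+ u\<in>{(y+l)/2..y}. (\<integral>\<^sup>+ z\<in>{u..y}. two_over_eta_sq \<eta> z \<partial>lborel) \<partial>lborel)"
  shows "ennreal B * emeasure \<mu> {x. x < m/2} \<le> (\<integral>\<^sup>+ x. qfun \<eta> y (y + (l - y) / m * x) \<partial>\<mu>)"
proof -
  let ?Q = "(\<integral>\<^sup>+ u\<in>{(y+l)/2..y}. (\<integral>\<^sup>+ z\<in>{u..y}. two_over_eta_sq \<eta> z \<partial>lborel) \<partial>lborel)"
  have pt: "?Q * indicator {x. x < m/2} x \<le> qfun \<eta> y (y + (l - y) / m * x)" for x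
  proof (cases "x < m/2")
    case True
    have a0: "(l - y) / m \<ge> 0" using m0 ly by (simp add: divide_nonpos_neg)
    have "(l - y) / m * x \<le> (l - y) / m * (m/2)" using True a0 by (intro mult_left_mono) auto
    also have "\<dots> = (l-y)/2" using m0 by simp
    finally have "y + (l - y) / m * x \<le> (y+l)/2" by simp
    thus ?thesis using True q_ge_Q[OF _ ly] by simp
  qed simp
  have "ennreal B * emeasure \<mu> {x. x < m/2} \<le> ?Q * emeasure \<mu> {x. x < m/2}"
    using B by (intro mult_right_mono) auto
  also have "\<dots> = (\<integral>\<^sup>+ x. ?Q * indicator {x. x < m/2} x \<partial>\<mu>)"
    by (rule nn_integral_cmult_indicator[symmetric]) (simp add: sets_mu)
  also have "\<dots> \<le> (\<integral>\<^sup>+ x. qfun \<eta> y (y + (l - y) / m * x) \<partial>\<mu>)"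
    by (intro nn_integral_mono pt)
  finally show ?thesis .
qed

theorem mainTheorem8:
  fixes \<eta> :: "real \<Rightarrow> real" and l :: real and \<mu> :: "real measure"
  assumes eta_borel: "\<eta> \<in> borel_measurable borel"
    and eta_nz: "\<And>x. x > l \<Longrightarrow> \<eta> x \<noteq> 0"
    and eta_off: "\<And>x. x \<le> l \<Longrightarrow> \<eta> x = 0"
    and loc_int: "\<And>a b. l < a \<Longrightarrow> a \<le> b \<Longrightarrow> set_integrable lborel {a..b} (\<lambda>z. 1 / (\<eta> z)^2)"
    and prob: "prob_space \<mu>"
    and sets_mu: "sets \<mu> = sets borel"
    and first_moment: "integrable \<mu> (\<lambda>x. x)"
    and centered: "(\<integral>x. x \<partial>\<mu>) = 0"
    and not_dirac: "\<mu> \<noteq> return borel 0"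
    and A2_bdd: "bdd_below (msupp \<mu>)"
    and A2_int: "\<exists>y0>l. \<forall>a>0. (\<integral>\<^sup>+ x\<in>{0..}. qfun \<eta> y0 (y0 + a * x) \<partial>\<mu>) < \<infinity>"
    and growth_l: "Limsup (at_right l) (\<lambda>x. ereal (\<bar>\<eta> x\<bar> / (x - l))) < \<infinity>"
    and growth_inf: "Limsup at_top (\<lambda>x. ereal (\<bar>\<eta> x\<bar> / x)) < \<infinity>"
  shows "Liminf at_top (\<lambda>y. Gfun \<eta> \<mu> y (abar l \<mu> y)) > 0
       \<and> Liminf (at_right l) (\<lambda>y. Gfun \<eta> \<mu> y (abar l \<mu> y)) > 0"
proof -
  interpret P: prob_space \<mu> by (rule prob)
  have sp: "space \<mu> = UNIV" using sets_eq_imp_space_eq[OF sets_mu] by simp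
  have neg: "emeasure \<mu> {x. x < 0} > 0"
  proof (rule ccontr)
    assume "\<not> ?thesis"
    hence z: "emeasure \<mu> {x. x < 0} = 0" by simp
    have "AE x in \<mu>. 0 \<le> x"
      by (subst AE_iff_measurable[of "{x. x < 0}"]) (auto simp: sets_mu sp z)
    hence ae0: "AE x in \<mu>. x = 0"
      using integral_nonneg_eq_0_iff_AE[OF first_moment] centered by simp
    have "\<mu> = return borel 0"
    proof (rule measure_eqI)
      show "sets \<mu> = sets (return borel 0)" by (simp add: sets_mu)
      fix A assume A: "A \<in> sets \<mu>"
      show "emeasure \<mu> A = emeasure (return borel 0) A"
      proof (cases "0 \<in> A")
        case True
        have "AE x in \<mu>. x \<in> A" using ae0 by eventually_elim (use True in auto)
        thus ?thesis using P.emeasure_eq_1_AE[OF A] True A sets_mu by simp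
      next
        case False
        have "AE x in \<mu>. x \<notin> A" using ae0 by eventually_elim (use False in auto)
        hence "emeasure \<mu> A = 0"
          by (subst (asm) AE_iff_measurable[of A]) (auto simp: A sp)
        thus ?thesis using False A sets_mu by simp
      qed
    qed
    thus False using not_dirac by simp
  qed
  obtain s0 where s0: "s0 \<in> msupp \<mu>" "s0 < 0" using supp_exists[OF sets_mu neg] by auto
  define m where "m = Inf (msupp \<mu>)"
  have ne: "msupp \<mu> \<noteq> {}" using s0 by auto
  have m0: "m < 0" using cInf_lower[OF s0(1) A2_bdd] s0 unfolding m_def by simp
  have "m < m/2" using m0 by simp
  then obtain s where s: "s \<in> msupp \<mu>" "s < m/2"
    by (metis cInf_less_iff[OF ne A2_bdd] m_def)
  have "m/2 - s > 0" using s by simp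
  hence "emeasure \<mu> {s - (m/2 - s)<..<s + (m/2 - s)} > 0" using s(1) unfolding msupp_def by blast
  also have "emeasure \<mu> {s - (m/2 - s)<..<s + (m/2 - s)} \<le> emeasure \<mu> {x. x < m/2}"
    by (intro emeasure_mono) (auto simp: sets_mu)
  finally have p0: "emeasure \<mu> {x. x < m/2} > 0" .
  have Geq: "Gfun \<eta> \<mu> y (abar l \<mu> y) = (\<integral>\<^sup>+ x. qfun \<eta> y (y + (l - y) / m * x) \<partial>\<mu>)" for y
    unfolding Gfun_def abar_def m_def by simp
  have pos: "0 < ennreal B * emeasure \<mu> {x. x < m/2}" if "B > 0" for B
    using p0 that by (simp add: ennreal_zero_less_mult_iff)
  have part1: "Liminf at_top (\<lambda>y. Gfun \<eta> \<mu> y (abar l \<mu> y)) > 0"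
  proof -
    obtain n :: nat where n: "Limsup at_top (\<lambda>x. ereal (\<bar>\<eta> x\<bar> / x)) < ereal (real n)"
      using growth_inf less_PInf_Ex_of_nat by auto
    define C where "C = real n + 1"
    have C0: "C > 0" unfolding C_def by simp
    have "eventually (\<lambda>x. ereal (\<bar>\<eta> x\<bar> / x) < ereal C) at_top"
      by (rule Limsup_lessD) (use n in \<open>auto simp: C_def intro: order.strict_trans\<close>)
    then obtain N where N: "\<And>x. x \<ge> N \<Longrightarrow> \<bar>\<eta> x\<bar> / x < C"
      unfolding eventually_at_top_linorder by auto
    define N' where "N' = max N 1"
    have bd: "\<bar>\<eta> z\<bar> \<le> C * z" if "z \<ge> N'" for z
    proof -
      have "z > 0" "z \<ge> N" using that unfolding N'_def by auto
      thus ?thesis using N[of z] by (simp add: divide_less_eq)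
    qed
    define B where "B = 1 / (32 * C^2)"
    have B0: "B > 0" using C0 unfolding B_def by simp
    have ev: "eventually (\<lambda>y. ennreal B * emeasure \<mu> {x. x < m/2} \<le> Gfun \<eta> \<mu> y (abar l \<mu> y)) at_top"
      unfolding eventually_at_top_linorder
    proof (intro exI allI impI)
      fix y assume y: "y \<ge> max (2*N' - l) (2*\<bar>l\<bar> + 1)"
      have y0: "y > 0" "l < y" "y - l \<ge> y/2" using y by auto
      have Kb: "\<bar>\<eta> z\<bar> \<le> C * y" if "z \<in> {(y+l)/2..y}" for z
      proof -
        have "z \<ge> N'" using that y by auto
        hence "\<bar>\<eta> z\<bar> \<le> C * z" by (rule bd)
        also have "\<dots> \<le> C * y" using that C0 by (intro mult_left_mono) auto
        finally show ?thesis .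
      qed
      have "(y/2)^2 \<le> (y-l)^2" using y0 by (intro power_mono) auto
      hence "(y/2)^2 / (8*C^2*y^2) \<le> (y-l)^2 / (8*C^2*y^2)"
        by (intro divide_right_mono) auto
      moreover have "(y/2)^2 / (8*C^2*y^2) = B" unfolding B_def using y0 C0 by (simp add: field_simps power2_eq_square)
      moreover have "(y-l)^2 / (8*C^2*y^2) = 2/(C*y)^2 * (y-l)^2/16" using y0 C0 by (simp add: field_simps power2_eq_square)
      ultimately have "B \<le> 2/(C*y)^2 * (y-l)^2/16" by simp
      hence "ennreal B \<le> ennreal (2/(C*y)^2 * (y-l)^2/16)" by (rule ennreal_leI)
      also have "\<dots> \<le> (\<integral>\<^sup>+ u\<in>{(y+l)/2..y}. (\<integral>\<^sup>+ z\<in>{u..y}. two_over_eta_sq \<eta> z \<partial>lborel) \<partial>lborel)"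
        by (rule Q_lower) (use y0 C0 Kb in auto)
      finally show "ennreal B * emeasure \<mu> {x. x < m/2} \<le> Gfun \<eta> \<mu> y (abar l \<mu> y)"
        unfolding Geq using G_lower[OF sets_mu m0 y0(2)] by simp
    qed
    have "ennreal B * emeasure \<mu> {x. x < m/2} \<le> Liminf at_top (\<lambda>y. Gfun \<eta> \<mu> y (abar l \<mu> y))"
      by (rule Liminf_bounded[OF ev])
    thus ?thesis using pos[OF B0] by (rule order.strict_trans2[rotated])
  qed
  have part2: "Liminf (at_right l) (\<lambda>y. Gfun \<eta> \<mu> y (abar l \<mu> y)) > 0"
  proof -
    obtain n :: nat where n: "Limsup (at_right l) (\<lambda>x. ereal (\<bar>\<eta> x\<bar> / (x - l))) < ereal (real n)"
      using growth_l less_PInf_Ex_of_nat by auto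
    define C where "C = real n + 1"
    have C0: "C > 0" unfolding C_def by simp
    have "eventually (\<lambda>x. ereal (\<bar>\<eta> x\<bar> / (x - l)) < ereal C) (at_right l)"
      by (rule Limsup_lessD) (use n in \<open>auto simp: C_def intro: order.strict_trans\<close>)
    then obtain b where b: "b > l" "\<And>x. x > l \<Longrightarrow> x < b \<Longrightarrow> \<bar>\<eta> x\<bar> / (x - l) < C"
      unfolding eventually_at_right_field by auto
    define B where "B = 1 / (8 * C^2)"
    have B0: "B > 0" using C0 unfolding B_def by simp
    have ev: "eventually (\<lambda>y. ennreal B * emeasure \<mu> {x. x < m/2} \<le> Gfun \<eta> \<mu> y (abar l \<mu> y)) (at_right l)"
      unfolding eventually_at_right_field
    proof (intro exI conjI allI impI)
      show "b > l" by fact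
      fix y assume y: "y > l" "y < b"
      have Kb: "\<bar>\<eta> z\<bar> \<le> C * (y - l)" if "z \<in> {(y+l)/2..y}" for z
      proof -
        have z: "z > l" "z < b" using that y by auto
        hence "\<bar>\<eta> z\<bar> \<le> C * (z - l)" using b(2)[of z] by (simp add: divide_less_eq)
        also have "\<dots> \<le> C * (y - l)" using that C0 by (intro mult_left_mono) auto
        finally show ?thesis .
      qed
      have "B = 2/(C*(y-l))^2 * (y-l)^2/16" unfolding B_def using y C0 by (intro Bconst) auto
      hence "ennreal B = ennreal (2/(C*(y-l))^2 * (y-l)^2/16)" by simp
      also have "\<dots> \<le> (\<integral>\<^sup>+ u\<in>{(y+l)/2..y}. (\<integral>\<^sup>+ z\<in>{u..y}. two_over_eta_sq \<eta> z \<partial>lborel) \<partial>lborel)"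
        by (rule Q_lower) (use y C0 Kb in auto)
      finally show "ennreal B * emeasure \<mu> {x. x < m/2} \<le> Gfun \<eta> \<mu> y (abar l \<mu> y)"
        unfolding Geq using G_lower[OF sets_mu m0 y(1)] by simp
    qed
    have "ennreal B * emeasure \<mu> {x. x < m/2} \<le> Liminf (at_right l) (\<lambda>y. Gfun \<eta> \<mu> y (abar l \<mu> y))"
      by (rule Liminf_bounded[OF ev])
    thus ?thesis using pos[OF B0] by (rule order.strict_trans2[rotated])
  qed
  show ?thesis using part1 part2 by simp
qed

end
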